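(* Let $X$ be a $T_1$ space and $\mathcal{P}$ an ideal of closed subsets of $X$. Let $\mathcal{P}'$ be the ideal of all closed subsets of $X$ contained in the set of isolated points of $X$. Then $C(X)_\mathcal{P}=C(X)$ if and only if $\mathcal{P}\subseteq\mathcal{P}'$.
   Context: An ideal of closed subsets of $X$ is a family $\mathcal{P}$ of closed subsets closed under finite unions and under passing to closed subsets. $D_f$ is the set of discontinuity points of $f\in\mathbb{R}^X$; $C(X)_\mathcal{P}=\{f\in\mathbb{R}^X\colon\overline{D_f}\in\mathcal{P}\}$; $C(X)$ is the ring of continuous real-valued functions on $X$. *)

theory Defs
  imports "HOL-Analysis.Analysis"
begin

text \<open>The space X is the whole carrier (UNIV) of a type of class t1_space.\<close>

definition discont_points :: "('a::topological_space \<Rightarrow> real) \<Rightarrow> 'a set" where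
  "discont_points f = {x. \<not> (f \<longlongrightarrow> f x) (at x)}"

definition closed_ideal :: "'a::topological_space set set \<Rightarrow> bool" where
  "closed_ideal P \<longleftrightarrow> (\<forall>A\<in>P. closed A) \<and> {} \<in> P \<and>
     (\<forall>A\<in>P. \<forall>B\<in>P. A \<union> B \<in> P) \<and>
     (\<forall>A\<in>P. \<forall>B. closed B \<and> B \<subseteq> A \<longrightarrow> B \<in> P)"

definition isolated_points :: "'a::topological_space set" where
  "isolated_points = {x. x isolated_in UNIV}"

definition isolated_ideal :: "'a::topological_space set set" where
  "isolated_ideal = {A. closed A \<and> A \<subseteq> isolated_points}"

definition C_ideal :: "'a::topological_space set set \<Rightarrow> ('a \<Rightarrow> real) set" where
  "C_ideal P = {f. closure (discont_points f) \<in> P}"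

definition C_cont :: "('a::topological_space \<Rightarrow> real) set" where
  "C_cont = {f. continuous_on UNIV f}"

end

theory Submission
  imports Defs
begin

lemma iso_iff: "(x::'a::topological_space) \<in> isolated_points \<longleftrightarrow> at x = bot"
  unfolding isolated_points_def isolated_in_def at_eq_bot_iff mem_Collect_eq
proof
  assume "x \<in> UNIV \<and> (\<exists>T. open T \<and> T \<inter> UNIV = {x})"
  then obtain T where "open T" "T \<inter> UNIV = {x}" by blast
  thus "open {x}" by simp
next
  assume "open {x}"
  thus "x \<in> UNIV \<and> (\<exists>T. open T \<and> T \<inter> UNIV = {x})" by blast
qed

lemma cont_at_iso: "at (x::'a::topological_space) = bot \<Longrightarrow> x \<notin> discont_points f"
  unfolding discont_points_def by simp

lemma C_cont_iff: "f \<in> C_cont \<longleftrightarrow> discont_points f = {}"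
  unfolding C_cont_def discont_points_def continuous_on_def by auto

lemma ci_closed:
  assumes "closed_ideal P" "A \<in> P" shows "closed A"
proof -
  have "\<forall>A\<in>P. closed A" using assms(1) unfolding closed_ideal_def by (elim conjE) assumption
  thus ?thesis using assms(2) by blast
qed

lemma ci_empty: "closed_ideal P \<Longrightarrow> {} \<in> P"
  unfolding closed_ideal_def by (elim conjE) assumption

lemma ci_sub:
  assumes "closed_ideal P" "A \<in> P" "closed B" "B \<subseteq> A" shows "B \<in> P"
proof -
  have "\<forall>A\<in>P. \<forall>B. closed B \<and> B \<subseteq> A \<longrightarrow> B \<in> P"
    using assms(1) unfolding closed_ideal_def by (elim conjE) assumption
  thus ?thesis using assms(2-4) by blast
qed

theorem theorem2p1:
  fixes P :: "'a::t1_space set set"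
  assumes "closed_ideal P"
  shows "C_ideal P = C_cont \<longleftrightarrow> P \<subseteq> isolated_ideal"
proof
  assume eq: "C_ideal P = C_cont"
  show "P \<subseteq> isolated_ideal"
  proof
    fix A assume A: "A \<in> P"
    have clA: "closed A" using ci_closed[OF assms A] .
    have "A \<subseteq> isolated_points"
    proof
      fix x assume xA: "x \<in> A"
      show "x \<in> isolated_points"
      proof (rule ccontr)
        assume "x \<notin> isolated_points"
        hence nb: "at x \<noteq> bot" by (simp add: iso_iff)
        define f :: "'a \<Rightarrow> real" where "f = (\<lambda>y. if y = x then 1 else 0)"
        have f0: "(f \<longlongrightarrow> 0) (at x)"
        proof (rule tendsto_eventually)
          show "eventually (\<lambda>y. f y = 0) (at x)"
            unfolding eventually_at_filter f_def by simp
        qed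
        have xD: "x \<in> discont_points f"
        proof -
          have "\<not> (f \<longlongrightarrow> 1) (at x)"
          proof
            assume f1: "(f \<longlongrightarrow> 1) (at x)"
            have "(0::real) = 1" by (rule tendsto_unique[OF nb f0 f1])
            thus False by simp
          qed
          moreover have "f x = 1" by (simp add: f_def)
          ultimately show ?thesis unfolding discont_points_def by simp
        qed
        have "discont_points f \<subseteq> {x}"
        proof
          fix y assume yD: "y \<in> discont_points f"
          show "y \<in> {x}"
          proof (rule ccontr)
            assume "y \<notin> {x}"
            hence "eventually (\<lambda>z. z \<in> - {x}) (nhds y)"
              using \<open>y \<notin> {x}\<close>
              by (intro eventually_nhds_in_open[OF open_Compl[OF closed_singleton]]) simp
            hence "eventually (\<lambda>z. f z = f y) (nhds y)"
            proof (rule eventually_mono)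
              fix z assume "z \<in> - {x}"
              thus "f z = f y" using \<open>y \<notin> {x}\<close> by (simp add: f_def)
            qed
            hence "eventually (\<lambda>z. f z = f y) (at y)"
              unfolding eventually_at_filter by (rule eventually_mono) simp
            hence "(f \<longlongrightarrow> f y) (at y)" by (rule tendsto_eventually)
            thus False using yD unfolding discont_points_def by simp
          qed
        qed
        hence D: "discont_points f = {x}" using xD by blast
        have "{x} \<subseteq> A" using xA by simp
        hence "{x} \<in> P" using ci_sub[OF assms A closed_singleton] by simp
        moreover have "closure (discont_points f) = {x}" using D by simp
        ultimately have "f \<in> C_ideal P" unfolding C_ideal_def by simp
        with eq have "f \<in> C_cont" by simp
        hence "discont_points f = {}" by (simp add: C_cont_iff)
        with xD show False by simp
      qed
    qed
    thus "A \<in> isolated_ideal" unfolding isolated_ideal_def using clA by simp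
  qed
next
  assume sub: "P \<subseteq> isolated_ideal"
  show "C_ideal P = C_cont"
  proof
    show "C_ideal P \<subseteq> C_cont"
    proof
      fix f :: "'a \<Rightarrow> real" assume "f \<in> C_ideal P"
      hence "closure (discont_points f) \<in> P" by (simp add: C_ideal_def)
      hence "closure (discont_points f) \<in> isolated_ideal" using sub by blast
      hence "closure (discont_points f) \<subseteq> isolated_points" by (simp add: isolated_ideal_def)
      hence sI: "discont_points f \<subseteq> isolated_points" using closure_subset by blast
      have "discont_points f = {}"
      proof (rule equals0I)
        fix y assume yD: "y \<in> discont_points f"
        with sI have "y \<in> isolated_points" by blast
        hence "at y = bot" by (simp add: iso_iff)
        from cont_at_iso[OF this] yD show False by simp
      qed
      thus "f \<in> C_cont" by (simp add: C_cont_iff)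
    qed
  next
    show "C_cont \<subseteq> C_ideal P"
    proof
      fix f :: "'a \<Rightarrow> real" assume "f \<in> C_cont"
      hence "discont_points f = {}" by (simp add: C_cont_iff)
      moreover have "{} \<in> P" using ci_empty[OF assms] .
      ultimately show "f \<in> C_ideal P" unfolding C_ideal_def by simp
    qed
  qed
qed

end
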